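(* Let $D$ be a strong nonseparable digraph, let $H$ be a strong nonseparable subdigraph of $D$, and let $P=(x_0,x_1,\ldots,x_{r-1},x_r)$ be an ear of $H$ in $D$ with length $l(P)=r\geq 2$. Suppose $H'=H\cup P$ has a kernel $N'$ and one of the following holds: (1) $x_0,x_r\in N'$; (2) $x_0\in N'$ and $x_r\notin N'$; (3) $x_0\notin N'$, $x_r\in N'$ and $l(P)$ is even; (4) $x_0,x_r\notin N'$ and $l(P)$ is odd. Then $H$ has a kernel.
   Context: All digraphs are finite, without loops or multiple arcs. Paths and cycles are directed; the length of a path is its number of arcs. A digraph is strong if for every ordered pair of vertices $x,y$ there is a directed path from $x$ to $y$; it is nonseparable if its underlying undirected graph is nonseparable (has no cut vertex). For a subdigraph $H$ of $D$, an ear of $H$ in $D$ is a directed path $(x_0,\ldots,x_r)$ in $D$ whose end vertices $x_0,x_r$ lie in $H$ and whose internal vertices $x_1,\ldots,x_{r-1}$ do not lie in $H$ (or a directed cycle with exactly one vertex $x_0=x_r$ in $H$). A kernel of a digraph is a set $N$ of vertices that is independent (no arc between two of its vertices) and absorbent (every vertex not in $N$ has an out-neighbour in $N$). *)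

theory Defs
  imports Main
begin

definition digraph :: "'a set \<Rightarrow> ('a \<times> 'a) set \<Rightarrow> bool" where
  "digraph V A \<longleftrightarrow> finite V \<and> A \<subseteq> V \<times> V \<and> (\<forall>x. (x, x) \<notin> A)"

definition subdigraph :: "'a set \<Rightarrow> ('a \<times> 'a) set \<Rightarrow> 'a set \<Rightarrow> ('a \<times> 'a) set \<Rightarrow> bool" where
  "subdigraph W B V A \<longleftrightarrow> digraph W B \<and> W \<subseteq> V \<and> B \<subseteq> A"

definition strong :: "'a set \<Rightarrow> ('a \<times> 'a) set \<Rightarrow> bool" where
  "strong V A \<longleftrightarrow> (\<forall>x\<in>V. \<forall>y\<in>V. (x, y) \<in> (Restr A V)\<^sup>*)"

definition und_connected :: "'a set \<Rightarrow> ('a \<times> 'a) set \<Rightarrow> bool" where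
  "und_connected W A \<longleftrightarrow> (\<forall>x\<in>W. \<forall>y\<in>W. (x, y) \<in> (Restr (A \<union> A\<inverse>) W)\<^sup>*)"

definition nonseparable :: "'a set \<Rightarrow> ('a \<times> 'a) set \<Rightarrow> bool" where
  "nonseparable V A \<longleftrightarrow> und_connected V A \<and> (\<forall>v\<in>V. und_connected (V - {v}) A)"

definition path_arcs :: "'a list \<Rightarrow> ('a \<times> 'a) set" where
  "path_arcs xs = {(xs ! i, xs ! Suc i) | i. Suc i < length xs}"

text \<open>An ear of H=(W,B) in D=(V,A): a directed path x_0..x_r in D (or a cycle with
  x_0 = x_r) whose ends lie in H and internal vertices lie outside H.
  The list xs is (x_0,...,x_r), so its length l(P) = r = length xs - 1.\<close>
definition ear :: "'a list \<Rightarrow> 'a set \<Rightarrow> ('a \<times> 'a) set \<Rightarrow> 'a set \<Rightarrow> ('a \<times> 'a) set \<Rightarrow> bool" where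
  "ear xs W B V A \<longleftrightarrow> length xs \<ge> 2 \<and> set xs \<subseteq> V \<and> path_arcs xs \<subseteq> A
     \<and> distinct (butlast xs) \<and> distinct (tl xs)
     \<and> hd xs \<in> W \<and> last xs \<in> W
     \<and> (\<forall>i. 0 < i \<and> i < length xs - 1 \<longrightarrow> xs ! i \<notin> W)"

definition kernel :: "'a set \<Rightarrow> ('a \<times> 'a) set \<Rightarrow> 'a set \<Rightarrow> bool" where
  "kernel V A N \<longleftrightarrow> N \<subseteq> V \<and> (\<forall>x\<in>N. \<forall>y\<in>N. (x, y) \<notin> A)
     \<and> (\<forall>v\<in>V - N. \<exists>u\<in>N. (v, u) \<in> A)"

definition has_kernel :: "'a set \<Rightarrow> ('a \<times> 'a) set \<Rightarrow> bool" where
  "has_kernel V A \<longleftrightarrow> (\<exists>N. kernel V A N)"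

end

theory Submission
  imports Defs
begin

theorem mainTheorem4:
  fixes V W :: "'a set" and A B :: "('a \<times> 'a) set" and xs :: "'a list" and N' :: "'a set"
  assumes "digraph V A" and "strong V A" and "nonseparable V A"
    and "subdigraph W B V A" and "strong W B" and "nonseparable W B"
    and "ear xs W B V A"
    and "length xs - 1 \<ge> 2"
    and "kernel (W \<union> set xs) (B \<union> path_arcs xs) N'"
    and "(hd xs \<in> N' \<and> last xs \<in> N')
       \<or> (hd xs \<in> N' \<and> last xs \<notin> N')
       \<or> (hd xs \<notin> N' \<and> last xs \<in> N' \<and> even (length xs - 1))
       \<or> (hd xs \<notin> N' \<and> last xs \<notin> N' \<and> odd (length xs - 1))"
  shows "has_kernel W B"
proof -
  define n where "n = length xs"
  define r where "r = n - 1"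
  have BW: "B \<subseteq> W \<times> W" using assms(4) unfolding subdigraph_def digraph_def by blast
  have ne: "xs \<noteq> []" and r2: "r \<ge> 2" using assms(8) unfolding r_def n_def by auto
  have hd0: "hd xs = xs ! 0" using ne by (simp add: hd_conv_nth)
  have lastr: "last xs = xs ! r" using ne unfolding r_def n_def by (simp add: last_conv_nth)
  have int: "\<And>i. 0 < i \<Longrightarrow> i < r \<Longrightarrow> xs ! i \<notin> W"
    using assms(7) unfolding ear_def r_def n_def by blast
  have dbl: "distinct (butlast xs)" using assms(7) unfolding ear_def by blast
  have lW: "last xs \<in> W" using assms(7) unfolding ear_def by blast
  have inj: "\<And>i j. i < r \<Longrightarrow> j < r \<Longrightarrow> xs ! i = xs ! j \<Longrightarrow> i = j"
  proof -
    fix i j assume "i < r" "j < r" "xs ! i = xs ! j"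
    hence "butlast xs ! i = butlast xs ! j" by (simp add: nth_butlast r_def n_def)
    thus "i = j" using dbl \<open>i < r\<close> \<open>j < r\<close> by (simp add: nth_eq_iff_index_eq r_def n_def)
  qed
  have K: "N' \<subseteq> W \<union> set xs" "\<forall>x\<in>N'. \<forall>y\<in>N'. (x, y) \<notin> B \<union> path_arcs xs"
    "\<forall>v\<in>(W \<union> set xs) - N'. \<exists>u\<in>N'. (v, u) \<in> B \<union> path_arcs xs"
    using assms(9) unfolding kernel_def by auto
  have arc: "\<And>i. Suc i < n \<Longrightarrow> (xs ! i, xs ! Suc i) \<in> path_arcs xs"
    unfolding path_arcs_def n_def by blast
  have alt: "\<And>i. 0 < i \<Longrightarrow> i < r \<Longrightarrow> (xs ! i \<in> N') = (xs ! Suc i \<notin> N')"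
  proof -
    fix i assume i: "0 < i" "i < r"
    show "(xs ! i \<in> N') = (xs ! Suc i \<notin> N')"
    proof
      assume a: "xs ! i \<in> N'"
      have "Suc i < n" using i unfolding r_def by simp
      hence "(xs ! i, xs ! Suc i) \<in> path_arcs xs" by (rule arc)
      thus "xs ! Suc i \<notin> N'" using K(2) a by auto
    next
      assume nn: "xs ! Suc i \<notin> N'"
      show "xs ! i \<in> N'"
      proof (rule ccontr)
        assume "xs ! i \<notin> N'"
        moreover have "xs ! i \<in> set xs" using i unfolding r_def n_def by auto
        ultimately obtain u where u: "u \<in> N'" "(xs ! i, u) \<in> B \<union> path_arcs xs" using K(3) by blast
        have "(xs ! i, u) \<notin> B" using BW int[OF i] by blast
        then obtain j where j: "xs ! i = xs ! j" "u = xs ! Suc j" "Suc j < n"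
          using u(2) unfolding path_arcs_def n_def by blast
        have "j < r" using j(3) unfolding r_def by auto
        hence "j = i" using inj[OF i(2) _ j(1)] by simp
        thus False using u(1) j(2) nn by blast
      qed
    qed
  qed
  have ind: "\<And>k. k \<le> r - 1 \<Longrightarrow> (xs ! (r - k) \<in> N') = (last xs \<in> N' \<longleftrightarrow> even k)"
  proof -
    fix k show "k \<le> r - 1 \<Longrightarrow> (xs ! (r - k) \<in> N') = (last xs \<in> N' \<longleftrightarrow> even k)"
    proof (induction k)
      case 0 thus ?case using lastr by simp
    next
      case (Suc k)
      hence IH: "(xs ! (r - k) \<in> N') = (last xs \<in> N' \<longleftrightarrow> even k)" by simp
      have "Suc (r - Suc k) = r - k" using Suc.prems r2 by simp
      hence "(xs ! (r - Suc k) \<in> N') = (xs ! (r - k) \<notin> N')"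
        using alt[of "r - Suc k"] Suc.prems r2 by simp
      thus ?case using IH by simp
    qed
  qed
  have x1: "hd xs \<notin> N' \<Longrightarrow> xs ! 1 \<notin> N'"
  proof -
    assume h: "hd xs \<notin> N'"
    have "xs ! 1 \<in> N' \<longleftrightarrow> (last xs \<in> N' \<longleftrightarrow> even (r - 1))"
      using ind[of "r - 1"] r2 by simp
    moreover have "even (r - 1) \<longleftrightarrow> odd r" using r2 by (cases r) auto
    ultimately show ?thesis using assms(10) h unfolding r_def n_def by auto
  qed
  have "kernel W B (N' \<inter> W)"
    unfolding kernel_def
  proof (intro conjI ballI)
    show "N' \<inter> W \<subseteq> W" by blast
  next
    fix x y assume "x \<in> N' \<inter> W" "y \<in> N' \<inter> W" thus "(x, y) \<notin> B" using K(2) by blast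
  next
    fix v assume v: "v \<in> W - N' \<inter> W"
    then obtain u where u: "u \<in> N'" "(v, u) \<in> B \<union> path_arcs xs" using K(3) by blast
    show "\<exists>u\<in>N' \<inter> W. (v, u) \<in> B"
    proof (cases "(v, u) \<in> B")
      case True thus ?thesis using u BW by blast
    next
      case False
      then obtain j where j: "v = xs ! j" "u = xs ! Suc j" "Suc j < n"
        using u(2) unfolding path_arcs_def n_def by blast
      have "j = 0"
      proof (rule ccontr)
        assume "j \<noteq> 0"
        thus False using int[of j] j v unfolding r_def by auto
      qed
      hence "v = hd xs" "u = xs ! 1" using j hd0 by auto
      thus ?thesis using x1 u v by auto
    qed
  qed
  thus ?thesis unfolding has_kernel_def by blast
qed

end
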